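(* Let $\mathbf{f}$ be the Fibonacci sequence, fixed point of the substitution $0\mapsto01$, $1\mapsto0$. For an integer $k\ge1$, $\mathbf{f}$ is totally $(k,1)$-unbalanced if and only if $k\ge4$.
   Context: For positive integers $k,C$, a sequence $\mathbf{x}$ is totally $(k,C)$-unbalanced if for every length-$k$ factor $w$ of $\mathbf{x}$ there exist two factors $u,v$ of $\mathbf{x}$ with $|u|=|v|$ and $||u|_w-|v|_w|>C$, where $|u|_w$ is the number of (possibly overlapping) occurrences of $w$ in $u$. *)

theory Defs
  imports Main
begin

fun fib_subst :: "nat \<Rightarrow> nat list" where
  "fib_subst 0 = [0, 1]"
| "fib_subst (Suc _) = [0]"

text \<open>Iterates of the substitution applied to the letter 0; each is a prefix of the next.\<close>
fun fib_iter :: "nat \<Rightarrow> nat list" where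
  "fib_iter 0 = [0]"
| "fib_iter (Suc n) = concat (map fib_subst (fib_iter n))"

text \<open>The Fibonacci word: the limit (fixed point) of the iterates.
  Since length (fib_iter n) > n, position i is read off the i-th iterate.\<close>
definition fib_word :: "nat \<Rightarrow> nat" where
  "fib_word i = fib_iter i ! i"

definition is_factor :: "(nat \<Rightarrow> 'a) \<Rightarrow> 'a list \<Rightarrow> bool" where
  "is_factor x w \<longleftrightarrow> (\<exists>i. w = map x [i..<i + length w])"

definition occ :: "'a list \<Rightarrow> 'a list \<Rightarrow> nat" where
  "occ u w = card {j. j + length w \<le> length u \<and> take (length w) (drop j u) = w}"

definition totally_unbalanced :: "(nat \<Rightarrow> 'a) \<Rightarrow> nat \<Rightarrow> nat \<Rightarrow> bool" where
  "totally_unbalanced x k C \<longleftrightarrow>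
     (\<forall>w. is_factor x w \<and> length w = k \<longrightarrow>
        (\<exists>u v. is_factor x u \<and> is_factor x v \<and> length u = length v \<and>
               \<bar>int (occ u w) - int (occ v w)\<bar> > int C))"

end

theory Submission
  imports Defs
begin


abbreviation F where "F \<equiv> fib_word"

lemma fib_subst_bin: "set (fib_subst x) \<subseteq> {0,1}"
  by (cases x) auto

lemma fib_iter_bin: "set (fib_iter n) \<subseteq> {0,1}"
  by (induction n) (auto dest: subsetD[OF fib_subst_bin])

lemma fib_iter_prefix: "\<exists>r. fib_iter (Suc n) = fib_iter n @ r"
proof (induction n)
  case 0 then show ?case by simp
next
  case (Suc n)
  then obtain r where "fib_iter (Suc n) = fib_iter n @ r" by blast
  then show ?case by simp
qed

lemma fib_iter_prefix_le: "m \<le> n \<Longrightarrow> \<exists>r. fib_iter n = fib_iter m @ r"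
proof (induction n rule: dec_induct)
  case base then show ?case by simp
next
  case (step n)
  then obtain r where "fib_iter n = fib_iter m @ r" by blast
  moreover obtain r' where "fib_iter (Suc n) = fib_iter n @ r'" using fib_iter_prefix by blast
  ultimately show ?case by auto
qed

lemma fib_iter_hd: "\<exists>r. fib_iter n = 0 # r"
  using fib_iter_prefix_le[of 0 n] by auto

lemma length_concat_subst: "set xs \<subseteq> {0,1} \<Longrightarrow>
   length (concat (map fib_subst xs)) = length xs + length (filter (\<lambda>x. x = 0) xs)"
  by (induction xs) auto

lemma fib_iter_len: "length (fib_iter n) > n"
proof (induction n)
  case 0 then show ?case by simp
next
  case (Suc n)
  obtain r where r: "fib_iter n = 0 # r" using fib_iter_hd by blast
  have "length (fib_iter (Suc n)) = length (fib_iter n) + length (filter (\<lambda>x. x = 0) (fib_iter n))"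
    using length_concat_subst[OF fib_iter_bin] by simp
  moreover have "length (filter (\<lambda>x. x = 0) (fib_iter n)) \<ge> 1" using r by simp
  ultimately show ?case using Suc by simp
qed

lemma F_iter: "i < length (fib_iter n) \<Longrightarrow> F i = fib_iter n ! i"
proof (cases "i \<le> n")
  case True
  then obtain r where "fib_iter n = fib_iter i @ r" using fib_iter_prefix_le by blast
  then show ?thesis using fib_iter_len[of i] by (simp add: fib_word_def nth_append)
next
  case False
  then obtain r where "fib_iter i = fib_iter n @ r" using fib_iter_prefix_le[of n i] by auto
  then show "i < length (fib_iter n) \<Longrightarrow> ?thesis" by (simp add: fib_word_def nth_append)
qed

lemma F_bin: "F i = 0 \<or> F i = 1"
proof -
  have "F i \<in> set (fib_iter i)" using fib_iter_len[of i] by (simp add: fib_word_def)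
  then show ?thesis using fib_iter_bin[of i] by auto
qed

lemma F_le1: "F i \<le> 1" using F_bin[of i] by auto

definition P :: "nat \<Rightarrow> nat" where "P t = (\<Sum>s<t. 2 - F s)"

lemma P_0[simp]: "P 0 = 0" by (simp add: P_def)
lemma P_Suc: "P (Suc t) = P t + (2 - F t)" by (simp add: P_def)

lemma len_subst_F: "length (fib_subst (F t)) = 2 - F t"
  using F_bin[of t] by auto

lemma concat_take_len: "set xs \<subseteq> {0,1} \<Longrightarrow> t \<le> length xs \<Longrightarrow>
  length (concat (map fib_subst (take t xs))) = (\<Sum>s<t. 2 - xs ! s)"
proof (induction t)
  case 0 then show ?case by simp
next
  case (Suc t)
  have "xs ! t \<in> set xs" using Suc.prems by simp
  then have "xs ! t = 0 \<or> xs ! t = 1" using Suc.prems(1) by blast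
  then have "length (fib_subst (xs ! t)) = 2 - xs ! t" by auto
  moreover have "take (Suc t) xs = take t xs @ [xs ! t]" using Suc.prems by (simp add: take_Suc_conv_app_nth)
  ultimately show ?case using Suc by simp
qed

lemma concat_map_split: "i < length xs \<Longrightarrow> concat (map f xs) = concat (map f (take i xs)) @ f (xs!i) @ concat (map f (drop (Suc i) xs))"
proof -
  assume "i < length xs"
  then have "xs = take i xs @ xs ! i # drop (Suc i) xs" by (rule id_take_nth_drop)
  then have "concat (map f xs) = concat (map f (take i xs @ xs ! i # drop (Suc i) xs))" by (rule arg_cong)
  then show ?thesis by simp
qed

lemma F_fix: "j < 2 - F t \<Longrightarrow> F (P t + j) = fib_subst (F t) ! j"
proof -
  assume j: "j < 2 - F t"
  let ?G = "fib_iter t"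
  have tl: "t < length ?G" using fib_iter_len by simp
  have Fs: "\<forall>s<t. F s = ?G ! s" using tl by (auto intro: F_iter)
  have Pt: "P t = length (concat (map fib_subst (take t ?G)))"
    using concat_take_len[OF fib_iter_bin, of t t] tl Fs by (simp add: P_def)
  have "fib_iter (Suc t) = concat (map fib_subst (take t ?G)) @ fib_subst (?G ! t) @ concat (map fib_subst (drop (Suc t) ?G))"
    unfolding fib_iter.simps(2) by (rule concat_map_split[OF tl])
  moreover have Ft: "F t = ?G ! t" using tl by (rule F_iter)
  ultimately have eq: "fib_iter (Suc t) ! (P t + j) = fib_subst (F t) ! j"
    using j len_subst_F[of t] Pt by (simp add: nth_append)
  have "P t + j < length (fib_iter (Suc t))"
    using \<open>fib_iter (Suc t) = _\<close> j len_subst_F[of t] Pt Ft by simp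
  then show ?thesis using eq F_iter by metis
qed

lemma F_P: "F (P t) = 0"
  using F_fix[of 0 t] F_bin[of t] by auto

lemma F_P1: "F t = 0 \<Longrightarrow> F (P t + 1) = 1"
  using F_fix[of 1 t] by auto

lemma F_0: "F 0 = 0" using F_P[of 0] by simp

lemma P_Suc_gt: "P t < P (Suc t)"
  using F_le1[of t] by (simp add: P_Suc)

lemma P_mono: "a < b \<Longrightarrow> P a < P b"
  by (rule lift_Suc_mono_less[of P, OF P_Suc_gt])

lemma P_inj: "P a = P b \<Longrightarrow> a = b"
  by (metis P_mono nat_neq_iff)

lemma P_ge: "t \<le> P t"
proof (induction t)
  case 0 then show ?case by simp
next
  case (Suc t)
  have "t < P (Suc t)" using Suc.IH P_Suc_gt[of t] by linarith
  then show ?case by simp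
qed

lemma cover: "\<exists>t r. x = P t + r \<and> r < 2 - F t"
proof (induction x)
  case 0 then show ?case using F_le1[of 0] by (intro exI[of _ 0]) auto
next
  case (Suc x)
  then obtain t r where tr: "x = P t + r" "r < 2 - F t" by blast
  show ?case
  proof (cases "Suc r < 2 - F t")
    case True then show ?thesis using tr by (intro exI[of _ t] exI[of _ "Suc r"]) auto
  next
    case False
    then have "Suc x = P (Suc t)" using tr by (simp add: P_Suc)
    then show ?thesis using F_le1[of "Suc t"] by (intro exI[of _ "Suc t"] exI[of _ 0]) auto
  qed
qed

lemma zero_P: "F x = 0 \<Longrightarrow> \<exists>t. x = P t"
proof -
  assume x: "F x = 0"
  obtain t r where tr: "x = P t + r" "r < 2 - F t" using cover by blast
  show ?thesis
  proof (cases r)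
    case 0 then show ?thesis using tr by auto
  next
    case (Suc r')
    then have "r = 1" "F t = 0" using tr F_bin[of t] by auto
    then show ?thesis using x tr F_P1 by auto
  qed
qed

lemma one_pos: "F x = 1 \<Longrightarrow> \<exists>t. x = P t + 1 \<and> F t = 0"
proof -
  assume x: "F x = 1"
  obtain t r where tr: "x = P t + r" "r < 2 - F t" using cover by blast
  show ?thesis
  proof (cases r)
    case 0 then show ?thesis using tr x F_P by auto
  next
    case (Suc r')
    then have "r = 1" "F t = 0" using tr F_bin[of t] by auto
    then show ?thesis using tr by auto
  qed
qed

lemma one_next: "F x = 1 \<Longrightarrow> F (Suc x) = 0"
proof -
  assume "F x = 1"
  then obtain t where t: "x = P t + 1" "F t = 0" using one_pos by blast
  then have "Suc x = P (Suc t)" by (simp add: P_Suc)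
  then show ?thesis using F_P by simp
qed

lemma one_prev: "F x = 1 \<Longrightarrow> 0 < x \<and> F (x - 1) = 0"
proof -
  assume "F x = 1"
  then obtain t where t: "x = P t + 1" "F t = 0" using one_pos by blast
  then show ?thesis using F_P[of t] by simp
qed


definition c1 :: "nat \<Rightarrow> nat \<Rightarrow> nat" where "c1 x y = (\<Sum>t\<in>{x..<y}. F t)"

lemma c1_split: "x \<le> y \<Longrightarrow> y \<le> z \<Longrightarrow> c1 x z = c1 x y + c1 y z"
  unfolding c1_def by (simp add: sum.atLeastLessThan_concat)

lemma c1_le: "c1 x y \<le> y - x"
proof -
  have "c1 x y \<le> (\<Sum>t\<in>{x..<y}. 1)" unfolding c1_def by (rule sum_mono) (rule F_le1)
  then show ?thesis by simp
qed

lemma c1_empty[simp]: "c1 x x = 0" by (simp add: c1_def)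

lemma c1_Suc: "x \<le> y \<Longrightarrow> c1 x (Suc y) = c1 x y + F y"
  unfolding c1_def by simp

lemma c1_left: "x < y \<Longrightarrow> c1 x y = F x + c1 (Suc x) y"
  unfolding c1_def by (simp add: sum.atLeast_Suc_lessThan)

lemma c1_one: "c1 x (Suc x) = F x" by (simp add: c1_def)

lemma P_diff: "a \<le> b \<Longrightarrow> P b + c1 a b = P a + 2 * (b - a)"
proof (induction b rule: dec_induct)
  case base then show ?case by simp
next
  case (step b)
  then show ?case using c1_Suc[of a b] P_Suc[of b] F_le1[of b] by (simp add: Suc_diff_le)
qed

lemma c1_block: "c1 (P b) (P (Suc b)) + F b = 1"
proof (cases "F b = 0")
  case True
  then have "P (Suc b) = Suc (Suc (P b))" by (simp add: P_Suc)
  then show ?thesis using True F_P[of b] F_P1[of b] c1_Suc[of "P b" "Suc (P b)"] c1_one[of "P b"] by simp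
next
  case False
  then have "F b = 1" using F_bin[of b] by auto
  then have "P (Suc b) = Suc (P b)" by (simp add: P_Suc)
  then show ?thesis using \<open>F b = 1\<close> F_P[of b] c1_one[of "P b"] by simp
qed

lemma c1_P: "a \<le> b \<Longrightarrow> c1 (P a) (P b) + c1 a b = b - a"
proof (induction b rule: dec_induct)
  case base then show ?case by simp
next
  case (step b)
  have "P a \<le> P b" using step(1) P_mono by (metis le_less)
  moreover have "P b \<le> P (Suc b)" using P_Suc_gt less_imp_le by blast
  ultimately have "c1 (P a) (P (Suc b)) = c1 (P a) (P b) + c1 (P b) (P (Suc b))" by (rule c1_split)
  then show ?case using step c1_block[of b] c1_Suc[of a b] by (simp add: Suc_diff_le)
qed

lemma P_le_iff: "P a \<le> P b \<longleftrightarrow> a \<le> b"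
  by (metis P_mono le_less not_le)

lemma balance: "c1 i (i+n) \<le> c1 j (j+n) + 1"
proof (induction n arbitrary: i j rule: less_induct)
  case (less n)
  show ?case
  proof (rule ccontr)
    assume A: "\<not> ?thesis"
    have "n \<noteq> 0"
    proof
      assume "n = 0" then show False using A by simp
    qed
    then obtain n' where n: "n = Suc n'" by (cases n) auto
    have e1: "c1 i (i+n) = F i + c1 (Suc i) (Suc i + n')" using c1_left[of i "i+n"] n by simp
    have e2: "c1 j (j+n) = F j + c1 (Suc j) (Suc j + n')" using c1_left[of j "j+n"] n by simp
    have e3: "c1 i (i+n) = c1 i (i+n') + F (i+n')" using c1_Suc[of i "i+n'"] n by simp
    have e4: "c1 j (j+n) = c1 j (j+n') + F (j+n')" using c1_Suc[of j "j+n'"] n by simp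
    have IH1: "c1 (Suc i) (Suc i + n') \<le> c1 (Suc j) (Suc j + n') + 1" using less.IH[of n' "Suc i" "Suc j"] n by simp
    have IH2: "c1 i (i + n') \<le> c1 j (j + n') + 1" using less.IH[of n' i j] n by simp
    have Fi: "F i = 1" using A e1 e2 IH1 F_bin[of i] by auto
    have Fj: "F j = 0" using A e1 e2 IH1 F_bin[of j] F_le1[of i] by auto
    have Fi': "F (i+n') = 1" using A e3 e4 IH2 F_bin[of "i+n'"] by auto
    have Fj': "F (j+n') = 0" using A e3 e4 IH2 F_bin[of "j+n'"] F_le1[of "i+n'"] by auto
    have "n' \<noteq> 0"
    proof
      assume "n' = 0"
      then show False using A n c1_one[of i] c1_one[of j] Fi Fj by simp
    qed
    obtain a where a: "i - 1 = P a" using one_prev[OF Fi] zero_P by blast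
    obtain b where b: "i + n = P b" using one_next[OF Fi'] zero_P n by fastforce
    obtain c where c: "j = P c" using Fj zero_P by blast
    obtain d where d: "j + n' = P d" using Fj' zero_P by blast
    have i0: "0 < i" "F (i - 1) = 0" using one_prev[OF Fi] by auto
    have ab: "a \<le> b" using a b i0 P_le_iff by (metis diff_le_self le_add1 le_trans)
    have cd: "c \<le> d" using c d P_le_iff by (metis le_add1)
    have X: "c1 i (i+n) = c1 (P a) (P b)"
      using c1_left[of "i-1" "i+n"] a b i0 by simp
    have Y: "c1 j (j+n) = c1 (P c) (P d)" using e4 c d Fj' by simp
    have X2: "c1 (P a) (P b) + c1 a b = b - a" using c1_P[OF ab] .
    have Y2: "c1 (P c) (P d) + c1 c d = d - c" using c1_P[OF cd] .
    have X3: "P b + c1 a b = P a + 2 * (b - a)" using P_diff[OF ab] .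
    have Y3: "P d + c1 c d = P c + 2 * (d - c)" using P_diff[OF cd] .
    define m where "m = d - c"
    have lens: "P b = P a + n + 1" "P d = P c + n'" using a b c d i0 n by auto
    have Ale: "c1 a b \<le> b - a" by (rule c1_le)
    have Cle: "c1 c d \<le> d - c" by (rule c1_le)
    have Lm: "b - a \<le> m" using A X Y X2 Y2 X3 Y3 lens m_def Ale Cle n by linarith
    have mn: "m < n" using Y3 lens m_def Cle n by linarith
    have s1: "c1 a (a+m) = c1 a b + c1 b (a+m)" using Lm ab by (intro c1_split) auto
    have s2: "c1 b (a+m) \<le> a + m - b" by (rule c1_le)
    have "c1 c (c+m) = c1 c d" using m_def cd by simp
    then have "c1 c (c+m) > c1 a (a+m) + 1"
      using A X Y X2 Y2 s1 s2 Lm m_def Ale Cle ab by linarith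
    moreover have "c1 c (c+m) \<le> c1 a (a+m) + 1" using less mn by blast
    ultimately show False by simp
  qed
qed

definition occ_at :: "nat list \<Rightarrow> nat \<Rightarrow> bool" where
  "occ_at w s \<longleftrightarrow> map F [s..<s+length w] = w"

lemma occ_at_Nil[simp]: "occ_at [] s" by (simp add: occ_at_def)

lemma occ_at_Cons[simp]: "occ_at (x#w) s \<longleftrightarrow> F s = x \<and> occ_at w (Suc s)"
  by (simp add: occ_at_def upt_conv_Cons del: upt_Suc)

lemma occ_at_append[simp]: "occ_at (u@v) s \<longleftrightarrow> occ_at u s \<and> occ_at v (s + length u)"
proof (induction u arbitrary: s)
  case Nil then show ?case by simp
next
  case (Cons x u) then show ?case by simp
qed

definition phi :: "nat list \<Rightarrow> nat list" where "phi z = concat (map fib_subst z)"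

lemma phi_Nil[simp]: "phi [] = []" by (simp add: phi_def)
lemma phi_Cons[simp]: "phi (x#z) = fib_subst x @ phi z" by (simp add: phi_def)

lemma occ_subst: "occ_at (fib_subst (F t)) (P t)"
  using F_bin[of t] F_P[of t] F_P1[of t] by auto

lemma occ_phi_fwd: "occ_at z t \<Longrightarrow> occ_at (phi z @ [0]) (P t)"
proof (induction z arbitrary: t)
  case Nil then show ?case using F_P by simp
next
  case (Cons x z)
  then have x: "F t = x" and z: "occ_at z (Suc t)" by auto
  have "P t + length (fib_subst x) = P (Suc t)" using x len_subst_F[of t] by (simp add: P_Suc)
  then show ?case using Cons.IH[OF z] occ_subst[of t] x by simp
qed

lemma occ_phi_bwd: "set z \<subseteq> {0,1} \<Longrightarrow> occ_at (phi z @ [0]) s \<Longrightarrow> \<exists>t. s = P t \<and> occ_at z t"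
proof (induction z arbitrary: s)
  case Nil then show ?case using zero_P by simp
next
  case (Cons x z)
  have zb: "set z \<subseteq> {0,1}" using Cons.prems by simp
  show ?case
  proof (cases "x = 0")
    case True
    then have h: "F s = 0" "F (Suc s) = 1" "occ_at (phi z @ [0]) (Suc (Suc s))" using Cons.prems by simp_all
    obtain t where t: "s = P t" using h zero_P by blast
    have Ft: "F t = 0"
    proof (rule ccontr)
      assume "F t \<noteq> 0"
      then have "F t = 1" using F_bin[of t] by auto
      then have "Suc s = P (Suc t)" using t by (simp add: P_Suc)
      then show False using h F_P by simp
    qed
    obtain t' where t': "Suc (Suc s) = P t'" "occ_at z t'" using Cons.IH[OF zb h(3)] by blast
    have "P (Suc t) = Suc (Suc s)" using t Ft by (simp add: P_Suc)
    then have "t' = Suc t" using t' P_inj by metis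
    then show ?thesis using t t' Ft True by auto
  next
    case False
    then have x1: "x = 1" using Cons.prems by auto
    then have h: "F s = 0" "occ_at (phi z @ [0]) (Suc s)" using Cons.prems by simp_all
    obtain t where t: "s = P t" using h zero_P by blast
    obtain t' where t': "Suc s = P t'" "occ_at z t'" using Cons.IH[OF zb h(2)] by blast
    have Ft: "F t = 1"
    proof (rule ccontr)
      assume "F t \<noteq> 1"
      then have "F t = 0" using F_bin[of t] by auto
      then have "F (Suc s) = 1" using t F_P1 by simp
      then show False using t' F_P by simp
    qed
    have "P (Suc t) = Suc s" using t Ft by (simp add: P_Suc)
    then have "t' = Suc t" using t' P_inj by metis
    then show ?thesis using t t' Ft x1 by auto
  qed
qed

definition count0 :: "nat list \<Rightarrow> nat" where "count0 w = length (filter (\<lambda>x. x = 0) w)"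

lemma decomp: "occ_at w s \<Longrightarrow> w \<noteq> [] \<Longrightarrow> hd w = 0 \<Longrightarrow> last w = 0 \<Longrightarrow>
  \<exists>z. set z \<subseteq> {0,1} \<and> w = phi z @ [0] \<and> Suc (length z) = count0 w"
proof (induction "length w" arbitrary: w s rule: less_induct)
  case less
  obtain r where w: "w = 0 # r" using less.prems by (cases w) auto
  show ?case
  proof (cases r)
    case Nil then show ?thesis using w by (intro exI[of _ "[]"]) (simp add: count0_def)
  next
    case (Cons x r')
    have Fx: "F (Suc s) = x" using less.prems w Cons by simp
    show ?thesis
    proof (cases "x = 0")
      case True
      have o: "occ_at r (Suc s)" using less.prems w by simp
      obtain z where z: "set z \<subseteq> {0,1}" "r = phi z @ [0]" "Suc (length z) = count0 r"
        using less.hyps[of r "Suc s"] o less.prems w Cons True by auto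
      show ?thesis using z w by (intro exI[of _ "1#z"]) (simp add: count0_def)
    next
      case False
      then have x1: "x = 1" using Fx F_bin[of "Suc s"] by auto
      have r'ne: "r' \<noteq> []" using less.prems w Cons x1 by auto
      have o: "occ_at r' (Suc (Suc s))" using less.prems w Cons by simp
      have "F (Suc (Suc s)) = 0" using one_next Fx x1 by simp
      then have "hd r' = 0" using o r'ne by (cases r') auto
      moreover have "last r' = 0" using less.prems w Cons r'ne by simp
      ultimately obtain z where z: "set z \<subseteq> {0,1}" "r' = phi z @ [0]" "Suc (length z) = count0 r'"
        using less.hyps[of r' "Suc (Suc s)"] o r'ne w Cons by auto
      show ?thesis using z w Cons x1 by (intro exI[of _ "0#z"]) (simp add: count0_def)
    qed
  qed
qed


lemma occ_at_nth: "occ_at w s \<longleftrightarrow> (\<forall>j<length w. F (s+j) = w ! j)"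
  unfolding occ_at_def list_eq_iff_nth_eq by simp

definition Wit :: "nat list \<Rightarrow> bool" where
  "Wit w \<longleftrightarrow> (\<forall>N. \<exists>p d q. N \<le> p \<and> N \<le> q \<and> 1 \<le> d \<and> occ_at w p \<and> occ_at w (p+d) \<and>
      (\<forall>t. q \<le> t \<and> t \<le> q+d \<longrightarrow> \<not> occ_at w t))"

definition Hb :: "nat list \<Rightarrow> bool" where
  "Hb z \<longleftrightarrow> (\<forall>N. \<exists>p d q e. N \<le> p \<and> N \<le> q \<and> 1 \<le> d \<and> occ_at z p \<and> occ_at z (p+d) \<and>
      (\<forall>t. q < t \<and> t < q+e \<longrightarrow> \<not> occ_at z t) \<and> 2*d + 2 + c1 q (q+e) \<le> 2*e + c1 p (p+d))"

lemma Hb_Wit_phi: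
  assumes zb: "set z \<subseteq> {0,1}" and H: "Hb z"
  shows "Wit (phi z @ [0])"
  unfolding Wit_def
proof
  fix N
  obtain p d q e where h: "N \<le> p" "N \<le> q" "1 \<le> d" "occ_at z p" "occ_at z (p+d)"
    "\<forall>t. q < t \<and> t < q+e \<longrightarrow> \<not> occ_at z t" "2*d + 2 + c1 q (q+e) \<le> 2*e + c1 p (p+d)"
    using H unfolding Hb_def by blast
  have dp: "P (p+d) + c1 p (p+d) = P p + 2 * d" using P_diff[of p "p+d"] by simp
  have ep: "P (q+e) + c1 q (q+e) = P q + 2 * e" using P_diff[of q "q+e"] by simp
  have c1d: "c1 p (p+d) \<le> d" using c1_le[of p "p+d"] by simp
  define d' where "d' = P (p+d) - P p"
  have d'1: "1 \<le> d'" using dp c1d h(3) d'_def by linarith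
  have o1: "occ_at (phi z @ [0]) (P p)" using occ_phi_fwd[OF h(4)] .
  have "P p \<le> P (p+d)" using P_le_iff[of p "p+d"] by simp
  then have "P p + d' = P (p+d)" using d'_def by simp
  then have o2: "occ_at (phi z @ [0]) (P p + d')" using occ_phi_fwd[OF h(5)] by simp
  have gap: "\<forall>t. Suc (P q) \<le> t \<and> t \<le> Suc (P q) + d' \<longrightarrow> \<not> occ_at (phi z @ [0]) t"
  proof (intro allI impI notI)
    fix t assume t: "Suc (P q) \<le> t \<and> t \<le> Suc (P q) + d'" and o: "occ_at (phi z @ [0]) t"
    obtain s where s: "t = P s" "occ_at z s" using occ_phi_bwd[OF zb o] by blast
    have "P q < P s" using t s by simp
    then have "q < s" using P_le_iff not_le by metis
    moreover have "P s < P (q+e)" using t s dp ep h(7) d'_def c1d by linarith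
    then have "s < q + e" using P_le_iff not_le by metis
    ultimately show False using h(6) s by blast
  qed
  have "N \<le> P p" using h(1) P_ge le_trans by blast
  moreover have "N \<le> Suc (P q)" using h(2) P_ge[of q] by linarith
  ultimately show "\<exists>p d q. N \<le> p \<and> N \<le> q \<and> 1 \<le> d \<and> occ_at (phi z @ [0]) p \<and> occ_at (phi z @ [0]) (p+d) \<and>
      (\<forall>t. q \<le> t \<and> t \<le> q+d \<longrightarrow> \<not> occ_at (phi z @ [0]) t)"
    using d'1 o1 o2 gap by (intro exI[of _ "P p"] exI[of _ d'] exI[of _ "Suc (P q)"]) auto
qed

lemma two_letters: "c1 x (x+2) \<le> 1"
proof -
  have "c1 x (x+2) = F x + F (Suc x)" using c1_Suc[of x "Suc x"] c1_one[of x] by simp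
  then show ?thesis using F_bin[of x] one_next[of x] F_le1[of "Suc x"] by auto
qed

lemma Wit_Hb: "Wit z \<Longrightarrow> Hb z"
  unfolding Hb_def
proof
  fix N assume W: "Wit z"
  obtain p d q where h: "Suc N \<le> p" "Suc N \<le> q" "1 \<le> d" "occ_at z p" "occ_at z (p+d)"
    "\<forall>t. q \<le> t \<and> t \<le> q+d \<longrightarrow> \<not> occ_at z t"
    using W unfolding Wit_def by blast
  define q' where "q' = q - 1"
  have qq: "q = Suc q'" using h(2) q'_def by simp
  have gap: "\<forall>t. q' < t \<and> t < q'+(d+2) \<longrightarrow> \<not> occ_at z t" using h(6) qq by auto
  have sp: "c1 q' (q' + (d+2)) = c1 q' (q'+d) + c1 (q'+d) (q'+d+2)"
    using c1_split[of q' "q'+d" "q'+d+2"] by (simp add: add.assoc)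
  have b: "c1 q' (q'+d) \<le> c1 p (p+d) + 1" by (rule balance)
  have tl: "c1 (q'+d) (q'+d+2) \<le> 1" by (rule two_letters)
  have A: "c1 q' (q'+(d+2)) \<le> c1 p (p+d) + 2" using sp b tl by linarith
  then have "2*d + 2 + c1 q' (q'+(d+2)) \<le> 2*(d+2) + c1 p (p+d)" by simp
  then show "\<exists>p d q e. N \<le> p \<and> N \<le> q \<and> 1 \<le> d \<and> occ_at z p \<and> occ_at z (p+d) \<and>
      (\<forall>t. q < t \<and> t < q+e \<longrightarrow> \<not> occ_at z t) \<and> 2*d + 2 + c1 q (q+e) \<le> 2*e + c1 p (p+d)"
    using h gap qq by (intro exI[of _ p] exI[of _ d] exI[of _ q'] exI[of _ "d+2"]) auto
qed

lemma Wit_phi: "set z \<subseteq> {0,1} \<Longrightarrow> Wit z \<Longrightarrow> Wit (phi z @ [0])"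
  using Hb_Wit_phi Wit_Hb by blast

lemma occ_prepend0: "occ_at (1#w) t \<Longrightarrow> 0 < t \<and> occ_at (0#1#w) (t-1)"
  using one_prev[of t] by auto

lemma Wit_cons0:
  assumes "hd w = 1" "w \<noteq> []" "Wit (0#w)" shows "Wit w"
proof -
  obtain w' where w: "w = 1 # w'" using assms by (cases w) auto
  show ?thesis unfolding Wit_def
  proof
    fix N
    obtain p d q where h: "N \<le> p" "N \<le> q" "1 \<le> d" "occ_at (0#w) p" "occ_at (0#w) (p+d)"
      "\<forall>t. q \<le> t \<and> t \<le> q+d \<longrightarrow> \<not> occ_at (0#w) t"
      using assms(3) unfolding Wit_def by blast
    have g: "\<forall>t. Suc q \<le> t \<and> t \<le> Suc q+d \<longrightarrow> \<not> occ_at w t"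
    proof (intro allI impI notI)
      fix t assume t: "Suc q \<le> t \<and> t \<le> Suc q + d" and o: "occ_at w t"
      then have o': "occ_at (0#w) (t-1)" using occ_prepend0[of w' t] w by auto
      have "q \<le> t - 1 \<and> t - 1 \<le> q + d" using t by auto
      then show False using h(6) o' by blast
    qed
    show "\<exists>p d q. N \<le> p \<and> N \<le> q \<and> 1 \<le> d \<and> occ_at w p \<and> occ_at w (p+d) \<and>
      (\<forall>t. q \<le> t \<and> t \<le> q+d \<longrightarrow> \<not> occ_at w t)"
      using h g by (intro exI[of _ "Suc p"] exI[of _ d] exI[of _ "Suc q"]) auto
  qed
qed

lemma occ_snoc0: "w \<noteq> [] \<Longrightarrow> last w = 1 \<Longrightarrow> occ_at w t \<longleftrightarrow> occ_at (w @ [0]) t"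
proof -
  assume ne: "w \<noteq> []" and l: "last w = 1"
  have "occ_at w t \<Longrightarrow> F (t + length w) = 0"
  proof -
    assume "occ_at w t"
    then have "F (t + (length w - 1)) = w ! (length w - 1)" using ne occ_at_nth by simp
    then have "F (t + (length w - 1)) = 1" using l ne by (simp add: last_conv_nth)
    then have h1: "F (Suc (t + (length w - 1))) = 0" by (rule one_next)
    have e: "t + length w = Suc (t + (length w - 1))" using ne by (cases w) auto
    show ?thesis unfolding e by (rule h1)
  qed
  then show ?thesis by auto
qed

lemma Wit_snoc0: "w \<noteq> [] \<Longrightarrow> last w = 1 \<Longrightarrow> Wit (w @ [0]) \<Longrightarrow> Wit w"
proof -
  assume "w \<noteq> []" "last w = 1" "Wit (w @ [0])"
  then have e: "\<And>t. occ_at (w @ [0]) t = occ_at w t" using occ_snoc0[of w] by blast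
  show ?thesis using \<open>Wit (w @ [0])\<close> unfolding Wit_def e by blast
qed

lemma P_add: "(\<forall>s'<s. F (x+s') = F s') \<Longrightarrow> P (x+s) = P x + P s"
proof (induction s)
  case 0 then show ?case by simp
next
  case (Suc s)
  then show ?case by (simp add: P_Suc)
qed

lemma P_gt: "Suc x < P (Suc x)"
proof (induction x)
  case 0 then show ?case using F_0 by (simp add: P_Suc)
next
  case (Suc x) then show ?case using P_Suc_gt[of "Suc x"] by linarith
qed

lemma Pn_ge: "Suc n \<le> (P ^^ n) 1"
proof (induction n)
  case 0 then show ?case by simp
next
  case (Suc n)
  then obtain y where "(P ^^ n) 1 = Suc y" by (cases "(P ^^ n) 1") auto
  then show ?case using Suc P_gt[of y] by simp
qed

lemma Pn_ge_t: "t \<le> (P ^^ n) t"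
  by (induction n) (auto intro: le_trans[OF _ P_ge])

lemma iterate_block: "F t = 0 \<Longrightarrow> j < (P ^^ n) 1 \<Longrightarrow> F ((P ^^ n) t + j) = F j"
proof (induction n arbitrary: j)
  case 0 then show ?case using F_0 by simp
next
  case (Suc n)
  obtain s r where sr: "j = P s + r" "r < 2 - F s" using cover by blast
  have "s < (P ^^ n) 1"
  proof (rule ccontr)
    assume "\<not> ?thesis"
    then have "P ((P ^^ n) 1) \<le> P s" using P_le_iff by simp
    then show False using Suc.prems sr by simp
  qed
  then have IH: "\<forall>s'<s. F ((P ^^ n) t + s') = F s'" "F ((P ^^ n) t + s) = F s"
    using Suc.IH[OF Suc.prems(1)] by auto
  have "P ((P ^^ n) t + s) = P ((P ^^ n) t) + P s" using P_add IH(1) by blast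
  then have eqj: "(P ^^ Suc n) t + j = P ((P ^^ n) t + s) + r" using sr by simp
  have "F (P ((P ^^ n) t + s) + r) = fib_subst (F ((P ^^ n) t + s)) ! r"
    using F_fix[of r "(P ^^ n) t + s"] sr IH(2) by simp
  then have "F ((P ^^ Suc n) t + j) = fib_subst (F ((P ^^ n) t + s)) ! r"
    by (simp only: eqj)
  also have "\<dots> = F (P s + r)" using F_fix[of r s] sr IH(2) by simp
  finally show ?case using sr by simp
qed

lemma recurrence: "\<exists>m\<ge>N. \<forall>j<L. F (m+j) = F j"
proof -
  have "\<forall>j<L. F ((P ^^ L) (P N) + j) = F j"
    using iterate_block[OF F_P[of N]] Pn_ge[of L] by auto
  moreover have "N \<le> (P ^^ L) (P N)" using P_ge[of N] Pn_ge_t[of "P N" L] by linarith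
  ultimately show ?thesis by blast
qed

lemma occ_local: "\<forall>j<L. F (m+j) = F j \<Longrightarrow> a + length z \<le> L \<Longrightarrow> occ_at z (m+a) \<longleftrightarrow> occ_at z a"
proof -
  assume h: "\<forall>j<L. F (m+j) = F j" and al: "a + length z \<le> L"
  have "\<And>j. j < length z \<Longrightarrow> F (m+a+j) = F (a+j)"
  proof -
    fix j assume "j < length z"
    then have "a + j < L" using al by simp
    then have "F (m + (a+j)) = F (a+j)" using h by blast
    then show "F (m+a+j) = F (a+j)" by (simp add: add.assoc)
  qed
  then show ?thesis unfolding occ_at_nth by auto
qed

lemma c1_local: "\<forall>j<L. F (m+j) = F j \<Longrightarrow> b \<le> L \<Longrightarrow> c1 (m+a) (m+b) = c1 a b"
proof -
  assume h: "\<forall>j<L. F (m+j) = F j" and b: "b \<le> L"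
  have "c1 (m+a) (m+b) = (\<Sum>t\<in>{a+m..<b+m}. F t)" unfolding c1_def by (simp add: add.commute)
  also have "\<dots> = (\<Sum>t\<in>{a..<b}. F (t + m))" by (rule sum.shift_bounds_nat_ivl)
  also have "\<dots> = (\<Sum>t\<in>{a..<b}. F t)" using h b by (intro sum.cong) (auto simp: add.commute)
  finally show ?thesis by (simp add: c1_def)
qed

lemma Hb_from:
  assumes "occ_at z p" "occ_at z (p+d)" "1 \<le> d"
    "\<forall>t. q < t \<and> t < q+e \<longrightarrow> \<not> occ_at z t" "2*d + 2 + c1 q (q+e) \<le> 2*e + c1 p (p+d)"
    "p+d+length z \<le> L" "q+e+length z \<le> L"
  shows "Hb z"
  unfolding Hb_def
proof
  fix N
  obtain m where m: "N \<le> m" "\<forall>j<L. F (m+j) = F j" using recurrence by blast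
  have o1: "occ_at z (m+p)" using occ_local[OF m(2), of p z] assms by simp
  have o2: "occ_at z (m+p+d)" using occ_local[OF m(2), of "p+d" z] assms by (simp add: add.assoc)
  have g: "\<forall>t. m+q < t \<and> t < m+q+e \<longrightarrow> \<not> occ_at z t"
  proof (intro allI impI)
    fix t assume t: "m+q < t \<and> t < m+q+e"
    define t0 where "t0 = t - m"
    have t0: "t = m + t0" "q < t0" "t0 < q + e" using t t0_def by auto
    then show "\<not> occ_at z t" using occ_local[OF m(2), of t0 z] assms by auto
  qed
  have c: "c1 (m+q) (m+q+e) = c1 q (q+e)" "c1 (m+p) (m+p+d) = c1 p (p+d)"
    using c1_local[OF m(2)] assms by (simp_all add: add.assoc)
  show "\<exists>p d q e. N \<le> p \<and> N \<le> q \<and> 1 \<le> d \<and> occ_at z p \<and> occ_at z (p+d) \<and>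
      (\<forall>t. q < t \<and> t < q+e \<longrightarrow> \<not> occ_at z t) \<and> 2*d + 2 + c1 q (q+e) \<le> 2*e + c1 p (p+d)"
    using m o1 o2 g c assms by (intro exI[of _ "m+p"] exI[of _ d] exI[of _ "m+q"] exI[of _ e]) auto
qed



lemma fib6: "fib_iter 6 = [0,1,0,0,1,0,1,0,0,1,0,0,1,0,1,0,0,1,0,1,0]"
  by (simp add: numeral_eq_Suc)

lemma fibF: "i < 21 \<Longrightarrow> F i = [0,1,0,0,1,0,1,0,0,1,0,0,1,0,1,0,0,1,0,1,0] ! i"
  using F_iter[of i 6] fib6 by simp

lemma F_vals:
  "F 0 = 0"
  "F 1 = 1"
  "F 2 = 0"
  "F 3 = 0"
  "F 4 = 1"
  "F 5 = 0"
  "F 6 = 1"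
  "F 7 = 0"
  "F 8 = 0"
  "F 9 = 1"
  "F 10 = 0"
  "F 11 = 0"
  "F 12 = 1"
  "F 13 = 0"
  "F 14 = 1"
  "F 15 = 0"
  "F 16 = 0"
  "F 17 = 1"
  "F 18 = 0"
  "F 19 = 1"
  "F 20 = 0"
  by (simp_all add: fibF)

lemma F_vals_Suc: "F (Suc (0)) = 1" "F (Suc (Suc (0))) = 0" "F (Suc (Suc (Suc (0)))) = 0" "F (Suc (Suc (Suc (Suc (0))))) = 1" "F (Suc (Suc (Suc (Suc (Suc (0)))))) = 0" "F (Suc (Suc (Suc (Suc (Suc (Suc (0))))))) = 1" "F (Suc (Suc (Suc (Suc (Suc (Suc (Suc (0)))))))) = 0" "F (Suc (Suc (Suc (Suc (Suc (Suc (Suc (Suc (0))))))))) = 0" "F (Suc (Suc (Suc (Suc (Suc (Suc (Suc (Suc (Suc (0)))))))))) = 1" "F (Suc (Suc (Suc (Suc (Suc (Suc (Suc (Suc (Suc (Suc (0))))))))))) = 0" "F (Suc (Suc (Suc (Suc (Suc (Suc (Suc (Suc (Suc (Suc (Suc (0)))))))))))) = 0"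
  using F_vals by (simp_all add: numeral_eq_Suc)



lemma c1_list: "c1 x y = sum_list (map F [x..<y])"
  unfolding c1_def by (simp add: sum_set_upt_conv_sum_list_nat[symmetric])

lemma Hb_00: "Hb [0,0]"
proof (rule Hb_from[where p=7 and d=3 and q=2 and e=4 and L=12])
  show "\<forall>t. 2 < t \<and> t < 2+4 \<longrightarrow> \<not> occ_at [0,0] t"
  proof (intro allI impI)
    fix t :: nat assume "2 < t \<and> t < 2+4"
    then have "t = 3 \<or> t = 4 \<or> t = 5" by auto
    then show "\<not> occ_at [0,0] t" by (auto simp: F_vals F_vals_Suc)
  qed
qed (simp_all add: F_vals F_vals_Suc c1_list upt_rec)

lemma Hb_01: "Hb [0,1]"
proof (rule Hb_from[where p=3 and d=2 and q=0 and e=3 and L=7])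
  show "\<forall>t. 0 < t \<and> t < 0+3 \<longrightarrow> \<not> occ_at [0,1] t"
  proof (intro allI impI)
    fix t :: nat assume "0 < t \<and> t < 0+3"
    then have "t = 1 \<or> t = 2" by auto
    then show "\<not> occ_at [0,1] t" by (auto simp: F_vals F_vals_Suc)
  qed
qed (simp_all add: F_vals F_vals_Suc c1_list upt_rec)

lemma Hb_10: "Hb [1,0]"
proof (rule Hb_from[where p=4 and d=2 and q=1 and e=3 and L=8])
  show "\<forall>t. 1 < t \<and> t < 1+3 \<longrightarrow> \<not> occ_at [1,0] t"
  proof (intro allI impI)
    fix t :: nat assume "1 < t \<and> t < 1+3"
    then have "t = 2 \<or> t = 3" by auto
    then show "\<not> occ_at [1,0] t" by (auto simp: F_vals F_vals_Suc)
  qed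
qed (simp_all add: F_vals F_vals_Suc c1_list upt_rec)

lemma Hb_001: "Hb [0,0,1]"
proof (rule Hb_from[where p=7 and d=3 and q=2 and e=4 and L=13])
  show "\<forall>t. 2 < t \<and> t < 2+4 \<longrightarrow> \<not> occ_at [0,0,1] t"
  proof (intro allI impI)
    fix t :: nat assume "2 < t \<and> t < 2+4"
    then have "t = 3 \<or> t = 4 \<or> t = 5" by auto
    then show "\<not> occ_at [0,0,1] t" by (auto simp: F_vals F_vals_Suc)
  qed
qed (simp_all add: F_vals F_vals_Suc c1_list upt_rec)

lemma Hb_010: "Hb [0,1,0]"
proof (rule Hb_from[where p=3 and d=2 and q=0 and e=3 and L=8])
  show "\<forall>t. 0 < t \<and> t < 0+3 \<longrightarrow> \<not> occ_at [0,1,0] t"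
  proof (intro allI impI)
    fix t :: nat assume "0 < t \<and> t < 0+3"
    then have "t = 1 \<or> t = 2" by auto
    then show "\<not> occ_at [0,1,0] t" by (auto simp: F_vals F_vals_Suc)
  qed
qed (simp_all add: F_vals F_vals_Suc c1_list upt_rec)

lemma Hb_100: "Hb [1,0,0]"
proof (rule Hb_from[where p=6 and d=3 and q=1 and e=5 and L=12])
  show "\<forall>t. 1 < t \<and> t < 1+5 \<longrightarrow> \<not> occ_at [1,0,0] t"
  proof (intro allI impI)
    fix t :: nat assume "1 < t \<and> t < 1+5"
    then have "t = 2 \<or> t = 3 \<or> t = 4 \<or> t = 5" by auto
    then show "\<not> occ_at [1,0,0] t" by (auto simp: F_vals F_vals_Suc)
  qed
qed (simp_all add: F_vals F_vals_Suc c1_list upt_rec)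

lemma Hb_101: "Hb [1,0,1]"
proof (rule Hb_from[where p=12 and d=5 and q=4 and e=7 and L=20])
  show "\<forall>t. 4 < t \<and> t < 4+7 \<longrightarrow> \<not> occ_at [1,0,1] t"
  proof (intro allI impI)
    fix t :: nat assume "4 < t \<and> t < 4+7"
    then have "t = 5 \<or> t = 6 \<or> t = 7 \<or> t = 8 \<or> t = 9 \<or> t = 10" by auto
    then show "\<not> occ_at [1,0,1] t" by (auto simp: F_vals F_vals_Suc)
  qed
qed (simp_all add: F_vals F_vals_Suc c1_list upt_rec)


lemma no11: "\<not> occ_at [1,1] t"
  using one_next[of t] by auto

lemma no000: "\<not> occ_at [0,0,0] t"
proof
  assume "occ_at [0,0,0] t"
  then have h: "F t = 0" "F (Suc t) = 0" "F (Suc (Suc t)) = 0" by auto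
  obtain s where s: "t = P s" using h zero_P by blast
  have Fs: "F s = 1" using F_P1[of s] h s F_bin[of s] by auto
  then have s1: "Suc t = P (Suc s)" using s by (simp add: P_Suc)
  have "F (Suc s) = 1" using F_P1[of "Suc s"] h s1 F_bin[of "Suc s"] by auto
  then show False using one_next[OF Fs] by simp
qed

lemma base:
  assumes zb: "set z \<subseteq> {0,1}" and o: "occ_at z t" and len: "length z = 2 \<or> length z = 3"
  shows "Hb z"
proof -
  have "(\<exists>a b. z = [a,b]) \<or> (\<exists>a b c. z = [a,b,c])" using len
    by (auto simp: length_Suc_conv numeral_3_eq_3 numeral_2_eq_2)
  then show ?thesis
  proof
    assume "\<exists>a b. z = [a,b]"
    then obtain a b where z: "z = [a,b]" by blast
    have "a = 0 \<or> a = 1" "b = 0 \<or> b = 1" using zb z by auto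
    then show ?thesis using z o no11[of t] Hb_00 Hb_01 Hb_10 by auto
  next
    assume "\<exists>a b c. z = [a,b,c]"
    then obtain a b c where z: "z = [a,b,c]" by blast
    have "a = 0 \<or> a = 1" "b = 0 \<or> b = 1" "c = 0 \<or> c = 1" using zb z by auto
    moreover have "\<not> occ_at [0,1,1] t" "\<not> occ_at [1,1,0] t" "\<not> occ_at [1,1,1] t"
      using no11[of "Suc t"] no11[of t] by auto
    ultimately show ?thesis using z o no000[of t] Hb_001 Hb_010 Hb_100 Hb_101 by auto
  qed
qed

lemma occ_bin: "occ_at w s \<Longrightarrow> set w \<subseteq> {0,1}"
proof
  fix x assume o: "occ_at w s" and x: "x \<in> set w"
  have "w = map F [s..<s+length w]" using o by (simp add: occ_at_def)
  then have "x \<in> set (map F [s..<s+length w])" using x by simp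
  then obtain i where "x = F i" by auto
  then show "x \<in> {0,1}" using F_bin[of i] by auto
qed

lemma len_phi: "length (phi z) \<le> 2 * length z"
proof (induction z)
  case Nil then show ?case by simp
next
  case (Cons x z)
  have "length (fib_subst x) \<le> 2" by (cases x) auto
  then show ?case using Cons by simp
qed

lemma count_bound:
  assumes "set w \<subseteq> {0,1}" "2 \<le> length w"
  shows "count0 w + (if hd w = 1 then 1 else 0) + (if last w = 1 then 1 else 0) \<le> length w"
proof -
  obtain a w' where w: "w = a # w'" using assms by (cases w) auto
  have "w' \<noteq> []" using assms w by auto
  then obtain m b where w': "w' = m @ [b]" by (metis append_butlast_last_id)
  have ab: "a = 0 \<or> a = 1" "b = 0 \<or> b = 1" using assms w w' by auto
  have "length (filter (\<lambda>x. x = 0) m) \<le> length m" by (rule length_filter_le)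
  then show ?thesis using ab w w' by (auto simp: count0_def)
qed

lemma main: "4 \<le> length w \<Longrightarrow> occ_at w s \<Longrightarrow> Wit w"
proof (induction "length w" arbitrary: w s rule: less_induct)
  case less
  have wb: "set w \<subseteq> {0,1}" using occ_bin less.prems by blast
  have ne: "w \<noteq> []" using less.prems by auto
  have hdb: "hd w = 0 \<or> hd w = 1" using wb ne hd_in_set by blast
  have lab: "last w = 0 \<or> last w = 1" using wb ne last_in_set by blast
  define w1 where "w1 = (if hd w = 1 then 0 # w else w)"
  have W1: "Wit w1 \<Longrightarrow> Wit w" using Wit_cons0 ne by (auto simp: w1_def split: if_splits)
  obtain s1 where o1: "occ_at w1 s1"
  proof (cases "hd w = 1")
    case True
    then obtain w' where "w = 1 # w'" using ne by (cases w) auto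
    then show ?thesis using that occ_prepend0[of w' s] less.prems True by (auto simp: w1_def)
  next
    case False then show ?thesis using that less.prems by (auto simp: w1_def)
  qed
  have h1: "hd w1 = 0" using hdb by (auto simp: w1_def)
  have w1ne: "w1 \<noteq> []" using ne by (auto simp: w1_def)
  have l1: "last w1 = last w" using ne by (auto simp: w1_def)
  have c1': "count0 w1 = count0 w + (if hd w = 1 then 1 else 0)" by (auto simp: w1_def count0_def)
  have len1: "length w \<le> length w1" by (auto simp: w1_def)
  define w2 where "w2 = (if last w1 = 1 then w1 @ [0] else w1)"
  have W2: "Wit w2 \<Longrightarrow> Wit w1" using Wit_snoc0 w1ne by (auto simp: w2_def split: if_splits)
  have o2: "occ_at w2 s1" using occ_snoc0[OF w1ne] o1 by (auto simp: w2_def)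
  have h2: "hd w2 = 0" using h1 w1ne by (auto simp: w2_def)
  have l2: "last w2 = 0" using l1 lab by (auto simp: w2_def)
  have w2ne: "w2 \<noteq> []" using w1ne by (auto simp: w2_def)
  have c2: "count0 w2 = count0 w1 + (if last w1 = 1 then 1 else 0)" by (auto simp: w2_def count0_def)
  have len2: "length w1 \<le> length w2" by (auto simp: w2_def)
  obtain z where z: "set z \<subseteq> {0,1}" "w2 = phi z @ [0]" "Suc (length z) = count0 w2"
    using decomp[OF o2 w2ne h2 l2] by blast
  obtain t where t: "s1 = P t" "occ_at z t" using occ_phi_bwd[OF z(1)] o2 z(2) by blast
  have "Suc (length z) \<le> length w" using count_bound[OF wb] less.prems z(3) c2 c1' l1 by simp
  then have zlt: "length z < length w" by simp
  have "length w2 = length (phi z) + 1" using z(2) by simp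
  then have z2: "2 \<le> length z" using len_phi[of z] len1 len2 less.prems(1) by linarith
  have "Wit z \<or> Hb z"
  proof (cases "4 \<le> length z")
    case True then show ?thesis using less.hyps[OF zlt True t(2)] by blast
  next
    case False
    then have "length z = 2 \<or> length z = 3" using z2 by linarith
    then show ?thesis using base[OF z(1) t(2)] by blast
  qed
  then have "Wit w2" using Wit_phi[OF z(1)] Hb_Wit_phi[OF z(1)] z(2) by auto
  then show ?case using W1 W2 by blast
qed

lemma occ_eq: "occ (map F [p..<p+L]) w = card {j. j + length w \<le> L \<and> occ_at w (p+j)}"
proof -
  have "\<And>j. j + length w \<le> L \<Longrightarrow> take (length w) (drop j (map F [p..<p+L])) = map F [p+j..<p+j+length w]"
    by (simp add: drop_map take_map)
  then show ?thesis unfolding occ_def occ_at_def by (intro arg_cong[where f=card]) auto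
qed

lemma unbal:
  assumes "Wit w"
  shows "\<exists>u v. is_factor F u \<and> is_factor F v \<and> length u = length v \<and> \<bar>int (occ u w) - int (occ v w)\<bar> > int 1"
proof -
  obtain p d q where h: "1 \<le> d" "occ_at w p" "occ_at w (p+d)" "\<forall>t. q \<le> t \<and> t \<le> q+d \<longrightarrow> \<not> occ_at w t"
    using assms unfolding Wit_def by blast
  define u where "u = map F [p..<p+(d+length w)]"
  define v where "v = map F [q..<q+(d+length w)]"
  have fu: "is_factor F u" unfolding is_factor_def u_def by (intro exI[of _ p]) simp
  have fv: "is_factor F v" unfolding is_factor_def v_def by (intro exI[of _ q]) simp
  let ?S = "{j. j + length w \<le> d + length w \<and> occ_at w (p+j)}"
  have "{0, d} \<subseteq> ?S" using h by auto
  moreover have "finite ?S" by (rule finite_subset[of _ "{..d}"]) auto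
  ultimately have "card {0, d} \<le> card ?S" by (rule card_mono[rotated])
  then have ou: "occ u w \<ge> 2" using h(1) occ_eq[of p "d + length w" w] u_def by simp
  have "{j. j + length w \<le> d + length w \<and> occ_at w (q+j)} = {}" using h(4) by auto
  then have ov: "occ v w = 0" using occ_eq[of q "d + length w" w] v_def by simp
  show ?thesis using fu fv ou ov by (intro exI[of _ u] exI[of _ v]) (auto simp: u_def v_def)
qed

lemma c1_card: "c1 x (x+m) = card {j. j < m \<and> F (x+j) = 1}"
proof (induction m)
  case 0 then show ?case by simp
next
  case (Suc m)
  have e: "c1 x (x + Suc m) = c1 x (x+m) + F (x+m)" using c1_Suc[of x "x+m"] by simp
  show ?case
  proof (cases "F (x+m) = 1")
    case True
    then have "{j. j < Suc m \<and> F (x+j) = 1} = insert m {j. j < m \<and> F (x+j) = 1}" by (auto simp: less_Suc_eq)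
    then show ?thesis using e Suc True by simp
  next
    case False
    then have F0: "F (x+m) = 0" using F_bin by blast
    have "{j. j < Suc m \<and> F (x+j) = 1} = {j. j < m \<and> F (x+j) = 1}" using False by (auto simp: less_Suc_eq)
    then show ?thesis using e Suc F0 by simp
  qed
qed

lemma occ_forced:
  assumes "w \<noteq> []" "\<forall>s. occ_at w s \<longleftrightarrow> F (s+off) = 1"
  shows "occ (map F [i..<i+n]) w = c1 (i+off) (i+off+(n+1-length w))"
proof -
  have "{j. j + length w \<le> n \<and> occ_at w (i+j)} = {j. j < n+1-length w \<and> F (i+off+j) = 1}"
    using assms by (auto simp: add.commute add.left_commute)
  then show ?thesis using occ_eq[of i n w] c1_card by simp
qed

lemma balanced_w:
  assumes "w \<noteq> []" "\<forall>s. occ_at w s \<longleftrightarrow> F (s+off) = 1"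
    "is_factor F u" "is_factor F v" "length u = length v"
  shows "\<bar>int (occ u w) - int (occ v w)\<bar> \<le> 1"
proof -
  obtain i where u: "u = map F [i..<i+length u]" using assms(3) unfolding is_factor_def by blast
  obtain j where v: "v = map F [j..<j+length u]" using assms(4,5) unfolding is_factor_def by auto
  define m where "m = length u + 1 - length w"
  have "occ u w = c1 (i+off) (i+off+m)" using occ_forced[OF assms(1,2), of i "length u"] u m_def by metis
  moreover have "occ v w = c1 (j+off) (j+off+m)" using occ_forced[OF assms(1,2), of j "length u"] v m_def by metis
  moreover have "c1 (i+off) (i+off+m) \<le> c1 (j+off) (j+off+m) + 1" by (rule balance)
  moreover have "c1 (j+off) (j+off+m) \<le> c1 (i+off) (i+off+m) + 1" by (rule balance)
  ultimately show ?thesis by linarith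
qed

theorem theorem16:
  fixes k :: nat
  assumes "k \<ge> 1"
  shows "totally_unbalanced fib_word k 1 \<longleftrightarrow> k \<ge> 4"
proof
  assume TU: "totally_unbalanced fib_word k 1"
  show "k \<ge> 4"
  proof (rule ccontr)
    assume "\<not> 4 \<le> k"
    then have k3: "k = 1 \<or> k = 2 \<or> k = 3" using assms by auto
    define w :: "nat list" where "w = (if k = 1 then [1] else if k = 2 then [0,1] else [0,1,0])"
    define off :: nat where "off = (if k = 1 then 0 else 1)"
    have lw: "length w = k" using k3 by (auto simp: w_def)
    have fw: "is_factor F w" unfolding is_factor_def
    proof (cases "k = 1")
      case True then show "\<exists>i. w = map F [i..<i + length w]"
        by (intro exI[of _ 1]) (simp add: w_def F_vals F_vals_Suc)
    next
      case False then show "\<exists>i. w = map F [i..<i + length w]"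
        using k3 by (intro exI[of _ 0]) (auto simp add: w_def F_vals F_vals_Suc)
    qed
    have ne: "w \<noteq> []" by (simp add: w_def)
    have forced: "\<forall>s. occ_at w s \<longleftrightarrow> F (s+off) = 1"
    proof
      fix s
      show "occ_at w s \<longleftrightarrow> F (s+off) = 1"
        using k3 one_prev[of "Suc s"] one_next[of "Suc s"] by (auto simp: w_def off_def)
    qed
    obtain u v where uv: "is_factor F u" "is_factor F v" "length u = length v"
      "\<bar>int (occ u w) - int (occ v w)\<bar> > int 1"
      using TU fw lw unfolding totally_unbalanced_def by blast
    show False using balanced_w[OF ne forced uv(1,2,3)] uv(4) by simp
  qed
next
  assume k4: "k \<ge> 4"
  show "totally_unbalanced fib_word k 1"
    unfolding totally_unbalanced_def
  proof (intro allI impI)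
    fix w :: "nat list" assume "is_factor fib_word w \<and> length w = k"
    then obtain i where "w = map F [i..<i + length w]" "length w = k" unfolding is_factor_def by blast
    then have "occ_at w i" "4 \<le> length w" using k4 by (auto simp: occ_at_def)
    then show "\<exists>u v. is_factor fib_word u \<and> is_factor fib_word v \<and> length u = length v \<and>
               \<bar>int (occ u w) - int (occ v w)\<bar> > int 1"
      using main unbal by blast
  qed
qed

end
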